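(* Let $m > 1$ be an integer, and let $\lambda = (\lambda_1, \ldots, \lambda_m)$ be a sequence of integers with $\lambda_1 \geq \cdots \geq \lambda_m > 0$ and $\lambda_1 > 1$. Define the sequence $\mu = (\mu_1, \ldots, \mu_{2m - 1})$ by \[\mu_{k} = \max_{\substack{1 \le i, j \le m\\ i + j - 1 = k}} (\lambda_i + \lambda_j - 1)\] for $1 \leq k \leq 2m-1$. Then \[\sum_{k=1}^{2m-1} \mu_k \geq 3\left(\sum_{k=1}^m \lambda_k\right) - 3.\] *)

theory Defs
  imports Main
begin

definition mu_seq :: "nat \<Rightarrow> (nat \<Rightarrow> int) \<Rightarrow> nat \<Rightarrow> int" where
  "mu_seq m lam k =
     Max {lam i + lam j - 1 | i j. 1 \<le> i \<and> i \<le> m \<and> 1 \<le> j \<and> j \<le> m \<and> i + j - 1 = k}"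

end

theory Submission
  imports Defs
begin

lemma mu_ge:
  assumes "1 \<le> i" "i \<le> m" "1 \<le> j" "j \<le> m"
  shows "mu_seq m lam (i + j - 1) \<ge> lam i + lam j - 1"
proof -
  let ?A = "{lam i + lam j - 1 | i j. 1 \<le> i \<and> i \<le> m \<and> 1 \<le> j \<and> j \<le> m \<and> i + j - 1 = i + j - 1}"
  have "{lam a + lam b - 1 | a b. 1 \<le> a \<and> a \<le> m \<and> 1 \<le> b \<and> b \<le> m \<and> a + b - 1 = i + j - 1}
        \<subseteq> (\<lambda>(a,b). lam a + lam b - 1) ` ({1..m}\<times>{1..m})" by force
  hence fin: "finite {lam a + lam b - 1 | a b. 1 \<le> a \<and> a \<le> m \<and> 1 \<le> b \<and> b \<le> m \<and> a + b - 1 = i + j - 1}"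
    by (rule finite_subset) auto
  have mem: "lam i + lam j - 1 \<in> {lam a + lam b - 1 | a b. 1 \<le> a \<and> a \<le> m \<and> 1 \<le> b \<and> b \<le> m \<and> a + b - 1 = i + j - 1}"
    using assms by blast
  show ?thesis unfolding mu_seq_def using Max_ge[OF fin mem] .
qed

lemma sum_split:
  assumes "a \<le> b + 1" "b \<le> c"
  shows "sum (f::nat\<Rightarrow>int) {a..c} = sum f {a..b} + sum f {b+1..c}"
proof -
  have "{a..c} = {a..b} \<union> {b+1..c}" using assms by auto
  moreover have "{a..b} \<inter> {b+1..c} = {}" by auto
  ultimately show ?thesis by (simp add: sum.union_disjoint)
qed

theorem lemmaA1:
  fixes m :: nat and lam :: "nat \<Rightarrow> int"
  assumes "m > 1"
    and "\<And>i j. 1 \<le> i \<Longrightarrow> i \<le> j \<Longrightarrow> j \<le> m \<Longrightarrow> lam i \<ge> lam j"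
    and "lam m > 0"
    and "lam 1 > 1"
  shows "(\<Sum>k=1..2*m-1. mu_seq m lam k) \<ge> 3 * (\<Sum>k=1..m. lam k) - 3"
proof -
  note mono = assms(2)
  have pos: "lam i \<ge> 1" if "1 \<le> i" "i \<le> m" for i
    using mono[OF that(1) that(2) order_refl] assms(3) by linarith
  define \<mu> where "\<mu> = mu_seq m lam"
  have mg: "\<mu> (i + j - 1) \<ge> lam i + lam j - 1" if "1 \<le> i" "i \<le> m" "1 \<le> j" "j \<le> m" for i j
    using mu_ge[OF that] unfolding \<mu>_def .
  have pre: "(\<Sum>k=1..2*q-1. \<mu> k) \<ge> 4 * (\<Sum>i=1..q. lam i) - lam 1 - lam q - 2 * int q + 1"
    if "1 \<le> q" "q \<le> m" for q
    using that
  proof (induction q rule: nat_induct_at_least)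
    case base
    have "\<mu> (1+1-1) \<ge> lam 1 + lam 1 - 1" using mg[of 1 1] base assms(1) by simp
    then show ?case by simp
  next
    case (Suc q)
    have e: "2 * Suc q - 1 = (2*q - 1) + 2" using Suc by simp
    have "(\<Sum>k=1..2 * Suc q - 1. \<mu> k) = (\<Sum>k=1..2*q-1. \<mu> k) + \<mu> (2*q) + \<mu> (2*q+1)"
    proof -
      obtain r where r: "2*q - 1 = r" "2*q = Suc r" using Suc by (intro that[of "2*q-1"]) auto
      have "2 * Suc q - 1 = Suc (Suc r)" using r by simp
      thus ?thesis using r by simp
    qed
    moreover have "\<mu> (2*q) \<ge> lam q + lam (Suc q) - 1"
    proof -
      have eq: "q + Suc q - 1 = 2*q" by simp
      have h: "\<mu> (q + Suc q - 1) \<ge> lam q + lam (Suc q) - 1" using mg[of q "Suc q"] Suc.hyps Suc.prems by simp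
      show ?thesis using h unfolding eq .
    qed
    moreover have "\<mu> (2*q+1) \<ge> lam (Suc q) + lam (Suc q) - 1"
    proof -
      have eq: "Suc q + Suc q - 1 = 2*q+1" by simp
      have h: "\<mu> (Suc q + Suc q - 1) \<ge> lam (Suc q) + lam (Suc q) - 1" using mg[of "Suc q" "Suc q"] Suc.hyps Suc.prems by simp
      show ?thesis using h unfolding eq .
    qed
    moreover have "(\<Sum>i=1..Suc q. lam i) = (\<Sum>i=1..q. lam i) + lam (Suc q)" using Suc by simp
    moreover have "4 * (\<Sum>i=1..q. lam i) - lam 1 - lam q - 2 * int q + 1 \<le> (\<Sum>k=1..2*q-1. \<mu> k)"
      using Suc.IH Suc.hyps Suc.prems by simp
    ultimately show ?case by simp
  qed
  define P where "P = {i. 1 \<le> i \<and> i \<le> m \<and> lam i \<ge> 2}"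
  have finP: "finite P" unfolding P_def by (rule finite_subset[of _ "{1..m}"]) auto
  have oneP: "1 \<in> P" unfolding P_def using assms(1,4) by auto
  define p where "p = Max P"
  have pP: "p \<in> P" unfolding p_def using finP oneP Max_in by blast
  hence p1: "1 \<le> p" and pm: "p \<le> m" and lp: "lam p \<ge> 2" unfolding P_def by auto
  have big: "lam i \<ge> 2" if "1 \<le> i" "i \<le> p" for i using mono[OF that pm] lp by linarith
  have ones: "lam i = 1" if "p < i" "i \<le> m" for i
  proof -
    have "i \<notin> P" using that finP Max_ge unfolding p_def by fastforce
    hence "lam i < 2" using that p1 unfolding P_def by auto
    thus ?thesis using pos[of i] that p1 by linarith
  qed
  have Sb: "(\<Sum>i=1..q. lam i) \<ge> lam 1 + lam q + 2 * (int q - 2)" if "2 \<le> q" "q \<le> p" for q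
    using that
  proof (induction q rule: nat_induct_at_least)
    case base
    then show ?case by (simp add: numeral_2_eq_2)
  next
    case (Suc q)
    have "lam q \<ge> 2" using big Suc by simp
    then show ?case using Suc by simp
  qed
  define S where "S = (\<Sum>i=1..p. lam i)"
  have key: "S - lam 1 - lam p - 2 * int p + 4 + int (m-p) * lam p - 2 * int (m - p) \<ge> 0"
  proof (cases "p = 1")
    case True
    have "int (m-1) * (lam 1 - 2) \<ge> 1 * (lam 1 - 2)"
      by (rule mult_right_mono) (use assms True in auto)
    then show ?thesis using True unfolding S_def by (simp add: algebra_simps)
  next
    case False
    have "int (m-p) * (lam p - 2) \<ge> 0" using lp by simp
    moreover have "S \<ge> lam 1 + lam p + 2 * (int p - 2)" unfolding S_def using Sb[of p] False p1 by simp
    ultimately show ?thesis by (simp add: algebra_simps)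
  qed
  have t1: "(\<Sum>k=2*p..m+p-1. \<mu> k) \<ge> int (m-p) * lam p"
  proof -
    have "(\<Sum>k=2*p..m+p-1. \<mu> k) \<ge> (\<Sum>k=2*p..m+p-1. lam p)"
    proof (rule sum_mono)
      fix k assume k: "k \<in> {2*p..m+p-1}"
      have "\<mu> (p + (k+1-p) - 1) \<ge> lam p + lam (k+1-p) - 1"
        using k p1 pm by (intro mg) auto
      moreover have "lam (k+1-p) \<ge> 1" using k p1 pm by (intro pos) auto
      moreover have "p + (k+1-p) - 1 = k" using k p1 by auto
      ultimately show "\<mu> k \<ge> lam p" by simp
    qed
    moreover have "card {2*p..m+p-1} = m - p" using p1 pm by simp
    ultimately show ?thesis by simp
  qed
  have t2: "(\<Sum>k=m+p..2*m-1. \<mu> k) \<ge> int (m-p)"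
  proof -
    have "(\<Sum>k=m+p..2*m-1. \<mu> k) \<ge> (\<Sum>k=m+p..2*m-1. 1)"
    proof (rule sum_mono)
      fix k assume k: "k \<in> {m+p..2*m-1}"
      have "\<mu> ((k+1-m) + m - 1) \<ge> lam (k+1-m) + lam m - 1"
        using k p1 pm by (intro mg) auto
      moreover have "lam (k+1-m) \<ge> 1" using k p1 pm by (intro pos) auto
      moreover have "lam m \<ge> 1" using assms(3) by simp
      moreover have "(k+1-m) + m - 1 = k" using k p1 by auto
      ultimately show "\<mu> k \<ge> 1" by simp
    qed
    moreover have "card {m+p..2*m-1} = m - p" using p1 pm by simp
    ultimately show ?thesis by simp
  qed
  have split1: "(\<Sum>k=1..2*m-1. \<mu> k) = (\<Sum>k=1..2*p-1. \<mu> k) + (\<Sum>k=2*p..2*m-1. \<mu> k)"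
    using sum_split[of 1 "2*p-1" "2*m-1" \<mu>] p1 pm by simp
  have split2: "(\<Sum>k=2*p..2*m-1. \<mu> k) = (\<Sum>k=2*p..m+p-1. \<mu> k) + (\<Sum>k=m+p..2*m-1. \<mu> k)"
    using sum_split[of "2*p" "m+p-1" "2*m-1" \<mu>] p1 pm by simp
  have split3: "(\<Sum>k=1..m. lam k) = S + (\<Sum>k=p+1..m. lam k)"
    unfolding S_def using sum_split[of 1 p m lam] p1 pm by simp
  have "(\<Sum>k=p+1..m. lam k) = (\<Sum>k=p+1..m. 1)" using ones by (intro sum.cong) auto
  hence sones: "(\<Sum>k=p+1..m. lam k) = int (m - p)" using pm by simp
  have "(\<Sum>k=1..2*p-1. \<mu> k) \<ge> 4 * S - lam 1 - lam p - 2 * int p + 1"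
    unfolding S_def using pre p1 pm by simp
  then show ?thesis unfolding \<mu>_def[symmetric] using split1 split2 split3 sones t1 t2 key by linarith
qed

end
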